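(* There exist a transient MDP (with a sink state) and a risk level $\alpha\in(0,1)$ such that the total reward criterion with nested CVaR or nested EVaR at level $\alpha$ is unbounded, i.e. the nested finite-horizon values $v_t(s)$ of some non-sink state $s$ satisfy $\lim_{t\to\infty}v_t(s)=-\infty$.
   Context: A transient MDP has finite states $\bar{\mathcal S}=\mathcal S\cup\{e\}$ with sink state $e$ ($p(e,a,e)=1$, $r(e,a)=0$) and finite actions, such that for every stationary deterministic policy $\pi$, $\sum_{t\ge0}\mathbb P^{\pi,s}[\tilde s_t=s']<\infty$ for all non-sink $s,s'$; rewards may be of any sign. For a risk measure $\psi$ (here $\psi=\mathrm{CVaR}_\alpha$ or $\mathrm{EVaR}_\alpha$, applied to rewards so that low values are bad) and a policy, the nested (Markov) risk value over horizon $t$ from state $s$ is $v_t(s)=\psi^s\big[r(\tilde s_0,\tilde a_0)+\psi\big[r(\tilde s_1,\tilde a_1)+\cdots+\psi[r(\tilde s_{t-1},\tilde a_{t-1})\mid\tilde s_{t-2}]\cdots\mid\tilde s_1\big]\big]$, where each inner $\psi[\cdot\mid\tilde s_k]$ is the risk measure applied to the conditional distribution of the next-step quantity given the current state. Here $\mathrm{CVaR}_\alpha[\tilde x]=\sup_{z\in\mathbb R}\{z-\alpha^{-1}\mathbb E[(z-\tilde x)_+]\}$ and $\mathrm{EVaR}_\alpha[\tilde x]=\sup_{\beta>0}\big(-\beta^{-1}\log\mathbb E e^{-\beta\tilde x}+\beta^{-1}\log\alpha\big)$. *)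

theory Defs
  imports "HOL-Probability.Probability"
begin

text \<open>Finite MDP encoded on natural numbers: state set S (containing the sink e),
  action set A, transition kernel P s a (a distribution on next states), reward R s a.\<close>

text \<open>Conditional value at risk of the random variable X under the distribution p
  (applied to rewards: low values are bad).\<close>
definition CVaR :: "real \<Rightarrow> 's pmf \<Rightarrow> ('s \<Rightarrow> real) \<Rightarrow> real" where
  "CVaR \<alpha> p X = (SUP z::real. z - measure_pmf.expectation p (\<lambda>x. max 0 (z - X x)) / \<alpha>)"

definition EVaR :: "real \<Rightarrow> 's pmf \<Rightarrow> ('s \<Rightarrow> real) \<Rightarrow> real" where
  "EVaR \<alpha> p X = (SUP \<beta>\<in>{0<..}.
      - ln (measure_pmf.expectation p (\<lambda>x. exp (- \<beta> * X x))) / \<beta> + ln \<alpha> / \<beta>)"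

fun state_dist :: "(nat \<Rightarrow> nat \<Rightarrow> nat pmf) \<Rightarrow> (nat \<Rightarrow> nat) \<Rightarrow> nat \<Rightarrow> nat \<Rightarrow> nat pmf" where
  "state_dist P \<pi> s 0 = return_pmf s"
| "state_dist P \<pi> s (Suc t) = bind_pmf (state_dist P \<pi> s t) (\<lambda>x. P x (\<pi> x))"

definition transient_mdp ::
  "nat set \<Rightarrow> nat set \<Rightarrow> nat \<Rightarrow> (nat \<Rightarrow> nat \<Rightarrow> nat pmf) \<Rightarrow> (nat \<Rightarrow> nat \<Rightarrow> real) \<Rightarrow> bool" where
  "transient_mdp S A e P R \<longleftrightarrow>
     finite S \<and> finite A \<and> A \<noteq> {} \<and> e \<in> S \<and>
     (\<forall>s\<in>S. \<forall>a\<in>A. set_pmf (P s a) \<subseteq> S) \<and>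
     (\<forall>a\<in>A. P e a = return_pmf e \<and> R e a = 0) \<and>
     (\<forall>\<pi>. (\<forall>s\<in>S. \<pi> s \<in> A) \<longrightarrow>
        (\<forall>s\<in>S - {e}. \<forall>s'\<in>S - {e}. summable (\<lambda>t. pmf (state_dist P \<pi> s t) s')))"

text \<open>Nested risk value: nv psi P R pi n k s is the value of the remaining n steps,
  started at time k in state s, under the Markov deterministic policy pi (time, state).\<close>
fun nv :: "(nat pmf \<Rightarrow> (nat \<Rightarrow> real) \<Rightarrow> real) \<Rightarrow> (nat \<Rightarrow> nat \<Rightarrow> nat pmf) \<Rightarrow>
    (nat \<Rightarrow> nat \<Rightarrow> real) \<Rightarrow> (nat \<Rightarrow> nat \<Rightarrow> nat) \<Rightarrow> nat \<Rightarrow> nat \<Rightarrow> nat \<Rightarrow> real" where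
  "nv \<psi> P R \<pi> 0 k s = 0"
| "nv \<psi> P R \<pi> (Suc n) k s =
     \<psi> (P s (\<pi> k s)) (\<lambda>s'. R s (\<pi> k s) + nv \<psi> P R \<pi> n (Suc k) s')"

definition nested_value ::
  "(nat pmf \<Rightarrow> (nat \<Rightarrow> real) \<Rightarrow> real) \<Rightarrow> (nat \<Rightarrow> nat \<Rightarrow> nat pmf) \<Rightarrow>
    (nat \<Rightarrow> nat \<Rightarrow> real) \<Rightarrow> (nat \<Rightarrow> nat \<Rightarrow> nat) \<Rightarrow> nat \<Rightarrow> nat \<Rightarrow> real" where
  "nested_value \<psi> P R \<pi> t s = nv \<psi> P R \<pi> t 0 s"

end

theory Submission
  imports Defs
begin

definition PP :: "nat \<Rightarrow> nat \<Rightarrow> nat pmf" where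
  "PP s a = (if s = 1 then pmf_of_set {0,1} else return_pmf 0)"

definition RR :: "nat \<Rightarrow> nat \<Rightarrow> real" where
  "RR s a = (if s = 1 then -1 else 0)"

lemma exp_lower:
  assumes fin: "finite (set_pmf p)" and nn: "\<And>y. f y \<ge> 0"
  shows "pmf p x * f x \<le> measure_pmf.expectation p f"
proof (cases "x \<in> set_pmf p")
  case True
  have "measure_pmf.expectation p f = (\<Sum>a\<in>set_pmf p. f a * pmf p a)"
    by (rule integral_measure_pmf_real[OF fin]) auto
  moreover have "f x * pmf p x \<le> (\<Sum>a\<in>set_pmf p. f a * pmf p a)"
    by (rule member_le_sum[OF True _ fin]) (simp add: nn)
  ultimately show ?thesis by (simp add: mult.commute)
next
  case False
  then have "pmf p x = 0" by (simp add: set_pmf_eq)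
  moreover have "measure_pmf.expectation p f \<ge> 0" by (simp add: nn)
  ultimately show ?thesis by simp
qed

lemma CVaR_le:
  assumes fin: "finite (set_pmf p)" and a: "0 < \<alpha>" "\<alpha> \<le> pmf p x"
  shows "CVaR \<alpha> p X \<le> X x"
  unfolding CVaR_def
proof (rule cSUP_least)
  fix z :: real
  have "pmf p x * max 0 (z - X x) \<le> measure_pmf.expectation p (\<lambda>x. max 0 (z - X x))"
    by (rule exp_lower[OF fin]) auto
  moreover have "\<alpha> * max 0 (z - X x) \<le> pmf p x * max 0 (z - X x)"
    using a by (intro mult_right_mono) auto
  moreover have "\<alpha> * (z - X x) \<le> \<alpha> * max 0 (z - X x)"
    by (rule mult_left_mono) (use a in auto)
  ultimately have "\<alpha> * (z - X x) \<le> measure_pmf.expectation p (\<lambda>x. max 0 (z - X x))"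
    by linarith
  then have "z - X x \<le> measure_pmf.expectation p (\<lambda>x. max 0 (z - X x)) / \<alpha>"
    using a by (simp add: pos_le_divide_eq mult.commute)
  then show "z - measure_pmf.expectation p (\<lambda>x. max 0 (z - X x)) / \<alpha> \<le> X x" by linarith
qed simp

lemma EVaR_le:
  assumes fin: "finite (set_pmf p)" and a: "0 < \<alpha>" "\<alpha> \<le> pmf p x"
  shows "EVaR \<alpha> p X \<le> X x"
  unfolding EVaR_def
proof (rule cSUP_least)
  fix \<beta> :: real assume "\<beta> \<in> {0<..}"
  then have b: "\<beta> > 0" by simp
  have "pmf p x * exp (- \<beta> * X x) \<le> measure_pmf.expectation p (\<lambda>x. exp (- \<beta> * X x))"
    by (rule exp_lower[OF fin]) auto
  moreover have "\<alpha> * exp (- \<beta> * X x) \<le> pmf p x * exp (- \<beta> * X x)"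
    using a by (intro mult_right_mono) auto
  ultimately have le: "\<alpha> * exp (- \<beta> * X x) \<le> measure_pmf.expectation p (\<lambda>x. exp (- \<beta> * X x))"
    by linarith
  have pos: "0 < \<alpha> * exp (- \<beta> * X x)" using a by simp
  have "ln (\<alpha> * exp (- \<beta> * X x)) \<le> ln (measure_pmf.expectation p (\<lambda>x. exp (- \<beta> * X x)))"
    using le pos by (subst ln_le_cancel_iff) auto
  moreover have "ln (\<alpha> * exp (- \<beta> * X x)) = ln \<alpha> - \<beta> * X x"
    using a by (simp add: ln_mult)
  ultimately have "ln \<alpha> - \<beta> * X x \<le> ln (measure_pmf.expectation p (\<lambda>x. exp (- \<beta> * X x)))"
    by simp
  then have "- ln (measure_pmf.expectation p (\<lambda>x. exp (- \<beta> * X x))) + ln \<alpha> \<le> \<beta> * X x"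
    by linarith
  then show "- ln (measure_pmf.expectation p (\<lambda>x. exp (- \<beta> * X x))) / \<beta> + ln \<alpha> / \<beta> \<le> X x"
    using b by (simp add: field_simps add_divide_distrib[symmetric])
qed simp

lemma pmf_half: "pmf (pmf_of_set {0::nat,1}) 1 = 1/2"
  by (simp add: pmf_of_set)

lemma fin_half: "finite (set_pmf (pmf_of_set {0::nat,1}))"
  by simp

lemma nv_bound:
  assumes h: "\<And>X. \<psi> (pmf_of_set {0::nat,1}) X \<le> X 1"
  shows "nv \<psi> PP RR \<pi> n k 1 \<le> - real n"
proof (induction n arbitrary: k)
  case 0 then show ?case by simp
next
  case (Suc n)
  have "nv \<psi> PP RR \<pi> (Suc n) k 1 = \<psi> (pmf_of_set {0,1}) (\<lambda>s'. -1 + nv \<psi> PP RR \<pi> n (Suc k) s')"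
    by (simp add: PP_def RR_def)
  also have "\<dots> \<le> -1 + nv \<psi> PP RR \<pi> n (Suc k) 1" by (rule h)
  also have "\<dots> \<le> - real (Suc n)" using Suc[of "Suc k"] by simp
  finally show ?case .
qed

lemma sd_support: "set_pmf (state_dist PP \<pi> 1 t) \<subseteq> {0,1}"
proof (induction t)
  case 0 then show ?case by simp
next
  case (Suc t)
  then show ?case by (auto simp: PP_def split: if_splits)
qed

lemma PP0: "PP 0 a = return_pmf 0" by (simp add: PP_def)
lemma PP1: "PP (Suc 0) a = pmf_of_set {0,1}" by (simp add: PP_def)

lemma sd_pmf: "pmf (state_dist PP \<pi> 1 t) 1 = (1/2)^t"
proof (induction t)
  case 0 then show ?case by simp
next
  case (Suc t)
  have "pmf (state_dist PP \<pi> 1 (Suc t)) 1 =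
     measure_pmf.expectation (state_dist PP \<pi> 1 t) (\<lambda>x. pmf (PP x (\<pi> x)) 1)"
    by (simp add: pmf_bind)
  also have "\<dots> = (\<Sum>a\<in>{0,1}. pmf (PP a (\<pi> a)) 1 * pmf (state_dist PP \<pi> 1 t) a)"
    by (rule integral_measure_pmf_real) (use sd_support in auto)
  also have "\<dots> = (1/2)^(Suc t)" using Suc by (simp add: PP0 PP1 pmf_of_set)
  finally show ?case .
qed

lemma sd_zero: "s \<noteq> 1 \<Longrightarrow> s \<noteq> 0 \<Longrightarrow> False" if "s \<in> {0::nat,1}" using that by auto

theorem proposition4:
  shows "\<exists>S A e P R (\<alpha>::real).
     transient_mdp S A e P R \<and> 0 < \<alpha> \<and> \<alpha> < 1 \<and>
     (\<exists>s\<in>S - {e}. \<forall>\<pi> :: nat \<Rightarrow> nat \<Rightarrow> nat \<Rightarrow> nat.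
        (\<forall>t k. \<forall>x\<in>S. \<pi> t k x \<in> A) \<longrightarrow>
          filterlim (\<lambda>t. nested_value (CVaR \<alpha>) P R (\<pi> t) t s) at_bot sequentially \<and>
          filterlim (\<lambda>t. nested_value (EVaR \<alpha>) P R (\<pi> t) t s) at_bot sequentially)"
proof -
  have tr: "transient_mdp {0,1} {0} 0 PP RR"
    unfolding transient_mdp_def
  proof (intro conjI ballI allI impI)
    fix \<pi> s s' assume "s \<in> {0::nat,1} - {0}" "s' \<in> {0::nat,1} - {0}"
    then have "s = 1" "s' = 1" by auto
    have "summable (\<lambda>t. pmf (state_dist PP \<pi> 1 t) 1)"
      unfolding sd_pmf by simp
    then show "summable (\<lambda>t. pmf (state_dist PP \<pi> s t) s')"
      using \<open>s = 1\<close> \<open>s' = 1\<close> by simp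
  qed (auto simp: PP_def RR_def)
  have lim: "filterlim (\<lambda>t. nested_value \<psi> PP RR (\<pi> t) t 1) at_bot sequentially"
    if h: "\<And>X. \<psi> (pmf_of_set {0::nat,1}) X \<le> X 1" for \<psi> and \<pi> :: "nat \<Rightarrow> nat \<Rightarrow> nat \<Rightarrow> nat"
    unfolding filterlim_at_bot
  proof
    fix Z :: real
    show "eventually (\<lambda>t. nested_value \<psi> PP RR (\<pi> t) t 1 \<le> Z) sequentially"
      unfolding eventually_sequentially
    proof (intro exI allI impI)
      fix t assume "t \<ge> nat \<lceil>- Z\<rceil>"
      then have "real t \<ge> - Z" by linarith
      moreover have "nested_value \<psi> PP RR (\<pi> t) t 1 \<le> - real t"
        unfolding nested_value_def by (rule nv_bound, rule h)
      ultimately show "nested_value \<psi> PP RR (\<pi> t) t 1 \<le> Z" by linarith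
    qed
  qed
  have c: "\<And>X. CVaR (1/2) (pmf_of_set {0::nat,1}) X \<le> X 1"
    by (rule CVaR_le[OF fin_half]) (simp_all add: pmf_half)
  have ev: "\<And>X. EVaR (1/2) (pmf_of_set {0::nat,1}) X \<le> X 1"
    by (rule EVaR_le[OF fin_half]) (simp_all add: pmf_half)
  show ?thesis
    apply (rule exI[of _ "{0,1}"], rule exI[of _ "{0}"], rule exI[of _ 0],
           rule exI[of _ PP], rule exI[of _ RR], rule exI[of _ "1/2"])
    using tr lim[of "CVaR (1/2)", OF c] lim[of "EVaR (1/2)", OF ev] by auto
qed

end
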